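(* Let $Y\subseteq\hat I_\tau$ be nonempty and suppose $p\nmid a_Y$. Then there is a rational interior point $\vartheta$ of $F_Y$ such that $p\nmid m$, where $m$ is the minimal positive multiple of $r$ with $\frac mr\vartheta\in X_*(T_{\mathrm{ad}})^\tau$.
   Context: $p$ is a prime (the characteristic of an algebraically closed field $\mathrm k$). $G$ is a connected simple algebraic group with maximal torus $T$, $T_{\mathrm{ad}}$ the image of $T$ in the adjoint group; $\tau$ a diagram automorphism of order $r$. $\hat I_\tau=I_\tau\sqcup\{o\}$ is the vertex set of the affine Dynkin diagram of the twisted loop group $G(\mathrm k((z)))^\tau$, $I_\tau$ the $\tau$-orbits of vertices of the diagram of $G$; $(a_i)_{i\in\hat I_\tau}$ the Kac labels ($a_o=1$); $X_*(T_{\mathrm{ad}})^\tau=\bigoplus_{i\in I_\tau}\mathbb Z\check\omega_i$, $\check\omega_o:=0$. The fundamental alcove in $X_*(T)^\tau_{\mathbb R}$ is the simplex with vertices $\check\omega_i/a_i$, $i\in\hat I_\tau$; $F_Y$ is its facet spanned by $\{\check\omega_i/a_i:i\in Y\}$; $a_Y=r\cdot\gcd\{a_i:i\in Y\}$. *)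

theory Defs
  imports "HOL-Analysis.Analysis"
begin

text \<open>Vertices of the affine diagram: \<open>Some i\<close> for \<open>i \<in> I_tau\<close> (the type 'i),
  and \<open>None\<close> for the extra vertex o.  Points of \<open>X_*(T)^tau_R\<close> are written in the
  basis of fundamental coweights \<open>omega_i\<close>, i.e. as vectors in real^'i.\<close>

definition fund_coweight :: "'i option \<Rightarrow> real ^ ('i::finite)" where
  "fund_coweight j = (case j of None \<Rightarrow> 0 | Some i \<Rightarrow> axis i 1)"

definition alcove_vertex :: "('i option \<Rightarrow> nat) \<Rightarrow> 'i option \<Rightarrow> real ^ ('i::finite)" where
  "alcove_vertex a j = (1 / real (a j)) *\<^sub>R fund_coweight j"

definition facet :: "('i option \<Rightarrow> nat) \<Rightarrow> 'i option set \<Rightarrow> (real ^ ('i::finite)) set" where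
  "facet a Y = convex hull (alcove_vertex a ` Y)"

definition a_Y :: "nat \<Rightarrow> ('i option \<Rightarrow> nat) \<Rightarrow> 'i option set \<Rightarrow> nat" where
  "a_Y r a Y = r * Gcd (a ` Y)"

text \<open>Membership in the lattice \<open>X_*(T_ad)^tau = \<Oplus>_i Z omega_i\<close>.\<close>
definition in_coweight_lattice :: "real ^ ('i::finite) \<Rightarrow> bool" where
  "in_coweight_lattice x \<longleftrightarrow> (\<forall>i. x $ i \<in> \<int>)"

definition rational_point :: "real ^ ('i::finite) \<Rightarrow> bool" where
  "rational_point x \<longleftrightarrow> (\<forall>i. x $ i \<in> \<rat>)"

end

theory Submission
  imports Defs
begin

lemma least_dvd:
  fixes r nn :: nat and \<theta> :: "real ^ ('i::finite)"
  defines "P \<equiv> \<lambda>m::nat. m > 0 \<and> r dvd m \<and> in_coweight_lattice ((real m / real r) *\<^sub>R \<theta>)"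
  assumes "P nn"
  shows "\<exists>m. P m \<and> (\<forall>m'. P m' \<longrightarrow> m \<le> m') \<and> m dvd nn"
proof -
  define m0 where "m0 = (LEAST m. P m)"
  have P0: "P m0" unfolding m0_def by (rule LeastI[of P nn]) (rule assms(2))
  have le: "\<forall>m'. P m' \<longrightarrow> m0 \<le> m'" unfolding m0_def by (auto intro: Least_le)
  define q where "q = nn mod m0"
  have m0pos: "m0 > 0" using P0 unfolding P_def by simp
  have "q = 0"
  proof (rule ccontr)
    assume qne: "q \<noteq> 0"
    have rq: "r dvd q" using P0 assms(2) unfolding P_def q_def by (simp add: dvd_mod)
    have qeq: "real q = real nn - real (nn div m0) * real m0"
      unfolding q_def by (metis add_diff_cancel_left' div_mult_mod_eq of_nat_add of_nat_mult)
    have "in_coweight_lattice ((real q / real r) *\<^sub>R \<theta>)"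
      unfolding in_coweight_lattice_def
    proof
      fix i
      have a1: "real nn / real r * \<theta> $ i \<in> \<int>" using assms(2) unfolding P_def in_coweight_lattice_def by auto
      have a0: "real m0 / real r * \<theta> $ i \<in> \<int>" using P0 unfolding P_def in_coweight_lattice_def by auto
      have "real q / real r * \<theta> $ i = real nn / real r * \<theta> $ i - of_int (int (nn div m0)) * (real m0 / real r * \<theta> $ i)"
        unfolding qeq by (simp add: diff_divide_distrib left_diff_distrib)
      also have "\<dots> \<in> \<int>" by (rule Ints_diff[OF a1 Ints_mult[OF Ints_of_int a0]])
      finally show "((real q / real r) *\<^sub>R \<theta>) $ i \<in> \<int>" by simp
    qed
    hence "P q" using qne rq unfolding P_def by simp
    hence "m0 \<le> q" using le by simp
    moreover have "q < m0" unfolding q_def using m0pos by simp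
    ultimately show False by simp
  qed
  hence "m0 dvd nn" unfolding q_def by (simp add: dvd_eq_mod_eq_0)
  thus ?thesis using P0 le by blast
qed

lemma fw_comp: "fund_coweight j $ i = (case j of None \<Rightarrow> 0 | Some k \<Rightarrow> (if k = i then 1 else 0))"
  by (cases j) (auto simp: fund_coweight_def axis_def)

lemma fw_Ints: "fund_coweight j $ i \<in> \<int>"
  by (cases j) (auto simp: fw_comp)

lemma av_inj:
  assumes "\<forall>j. a j > 0"
  shows "inj_on (alcove_vertex a) Y"
proof (rule inj_onI)
  fix j k assume "alcove_vertex a j = alcove_vertex a k"
  hence e: "\<And>i. alcove_vertex a j $ i = alcove_vertex a k $ i" by simp
  have c: "alcove_vertex a j $ i = (case j of None \<Rightarrow> 0 | Some k \<Rightarrow> (if k = i then 1 / real (a j) else 0))" for j i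
    by (cases j) (auto simp: alcove_vertex_def fw_comp)
  show "j = k"
  proof (cases j)
    case None
    show ?thesis
    proof (cases k)
      case (Some k')
      have "alcove_vertex a k $ k' \<noteq> 0" using assms Some by (simp add: c)
      thus ?thesis using e[of k'] None by (simp add: c)
    qed (simp add: None)
  next
    case (Some j')
    have "alcove_vertex a j $ j' \<noteq> 0" using assms Some by (simp add: c)
    hence "alcove_vertex a k $ j' \<noteq> 0" using e by simp
    thus ?thesis using Some by (cases k) (auto simp: c split: if_splits)
  qed
qed

lemma construct:
  fixes p r :: nat and a :: "('i::finite) option \<Rightarrow> nat" and Y :: "'i option set"
    and x :: "'i option \<Rightarrow> nat"
  assumes "prime p" and r0: "r > 0" and apos: "\<forall>j. a j > 0"
    and xpos: "\<forall>j\<in>Y. x j > 0" and "Y \<noteq> {}"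
    and ndvd: "\<not> p dvd (r * (\<Sum>j\<in>Y. a j * x j))"
  shows "\<exists>\<theta>. rational_point \<theta> \<and> \<theta> \<in> rel_interior (facet a Y) \<and>
           (\<exists>m::nat. m > 0 \<and> r dvd m \<and>
                in_coweight_lattice ((real m / real r) *\<^sub>R \<theta>) \<and>
                (\<forall>m'::nat. m' > 0 \<and> r dvd m' \<and>
                    in_coweight_lattice ((real m' / real r) *\<^sub>R \<theta>) \<longrightarrow> m \<le> m') \<and>
                \<not> p dvd m)"
proof -
  define M where "M = (\<Sum>j\<in>Y. a j * x j)"
  have fin: "finite Y" by simp
  have Mpos: "M > 0" unfolding M_def using xpos apos \<open>Y \<noteq> {}\<close> fin
    by (metis ex_in_conv nat_0_less_mult_iff sum_pos2 zero_le)
  define \<theta> where "\<theta> = (\<Sum>j\<in>Y. (real (x j) / real M) *\<^sub>R fund_coweight j)"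
  define f where "f = alcove_vertex a"
  have inj: "inj_on f Y" unfolding f_def using av_inj apos by blast
  define u where "u = (\<lambda>v. real (a (the_inv_into Y f v) * x (the_inv_into Y f v)) / real M)"
  have uf: "u (f j) = real (a j * x j) / real M" if "j \<in> Y" for j
    unfolding u_def using the_inv_into_f_f[OF inj that] by simp
  have "\<theta> \<in> rel_interior (convex hull (f ` Y))"
  proof (rule subsetD[OF explicit_subset_rel_interior_convex_hull_minimal], simp, safe)
    show "\<exists>u. (\<forall>x\<in>f ` Y. 0 < u x) \<and> sum u (f ` Y) = 1 \<and> (\<Sum>x\<in>f ` Y. u x *\<^sub>R x) = \<theta>"
    proof (intro exI conjI)
      show "\<forall>v\<in>f ` Y. 0 < u v" using uf apos xpos Mpos by auto
      have "sum u (f ` Y) = (\<Sum>j\<in>Y. real (a j * x j) / real M)"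
        by (simp add: sum.reindex[OF inj] uf)
      also have "\<dots> = real M / real M" unfolding sum_divide_distrib[symmetric] M_def by simp
      also have "\<dots> = 1" using Mpos by simp
      finally show "sum u (f ` Y) = 1" .
      have "(\<Sum>v\<in>f ` Y. u v *\<^sub>R v) = (\<Sum>j\<in>Y. (real (a j * x j) / real M) *\<^sub>R f j)"
        by (simp add: sum.reindex[OF inj] uf)
      also have "\<dots> = \<theta>" unfolding \<theta>_def f_def alcove_vertex_def
        using apos by (intro sum.cong refl) (simp add: field_simps)
      finally show "(\<Sum>v\<in>f ` Y. u v *\<^sub>R v) = \<theta>" .
    qed
  qed
  hence int: "\<theta> \<in> rel_interior (facet a Y)" unfolding facet_def f_def .
  have rat: "rational_point \<theta>" unfolding rational_point_def \<theta>_def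
    by (auto simp: fw_comp intro!: Rats_sum split: option.splits)
  define P where "P = (\<lambda>m::nat. m > 0 \<and> r dvd m \<and> in_coweight_lattice ((real m / real r) *\<^sub>R \<theta>))"
  have "P (r * M)"
    unfolding P_def
  proof (intro conjI)
    show "r * M > 0" using r0 Mpos by simp
    show "r dvd r * M" by simp
    have "(real (r * M) / real r) *\<^sub>R \<theta> = (\<Sum>j\<in>Y. real (x j) *\<^sub>R fund_coweight j)"
      unfolding \<theta>_def scaleR_sum_right using r0 Mpos by (intro sum.cong refl) simp
    thus "in_coweight_lattice ((real (r * M) / real r) *\<^sub>R \<theta>)"
      unfolding in_coweight_lattice_def
      by (auto intro!: Ints_sum Ints_mult fw_Ints)
  qed
  then obtain m where m: "P m" "\<forall>m'. P m' \<longrightarrow> m \<le> m'" "m dvd r * M"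
  proof -
    have "\<exists>m. P m \<and> (\<forall>m'. P m' \<longrightarrow> m \<le> m') \<and> m dvd r * M"
      using least_dvd[where r=r and nn="r * M" and \<theta>=\<theta>] \<open>P (r * M)\<close> unfolding P_def by (rule meta_mp)
    thus ?thesis using that by blast
  qed
  have "\<not> p dvd m" using m(3) ndvd unfolding M_def using dvd_trans by metis
  show ?thesis apply (rule exI[of _ \<theta>]) using rat int m \<open>\<not> p dvd m\<close> unfolding P_def by auto
qed


theorem lemma2p6:
  fixes p r :: nat
    and a :: "('i::finite) option \<Rightarrow> nat"
    and Y :: "'i option set"
  assumes "prime p"
    and "r \<in> {1, 2, 3}"
    and "\<forall>j. a j > 0"
    and "a None = 1"
    and "Y \<noteq> {}"
    and "\<not> p dvd a_Y r a Y"
  shows "\<exists>\<theta>. rational_point \<theta> \<and> \<theta> \<in> rel_interior (facet a Y) \<and>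
           (\<exists>m::nat. m > 0 \<and> r dvd m \<and>
                in_coweight_lattice ((real m / real r) *\<^sub>R \<theta>) \<and>
                (\<forall>m'::nat. m' > 0 \<and> r dvd m' \<and>
                    in_coweight_lattice ((real m' / real r) *\<^sub>R \<theta>) \<longrightarrow> m \<le> m') \<and>
                \<not> p dvd m)"
proof -
  have r0: "r > 0" using assms(2) by auto
  have pr: "\<not> p dvd r" and pg: "\<not> p dvd Gcd (a ` Y)"
    using assms(6) unfolding a_Y_def by auto
  obtain j0 where j0: "j0 \<in> Y" "\<not> p dvd a j0"
    using pg Gcd_greatest[of "a ` Y" p] by blast
  define S where "S = (\<Sum>j\<in>Y. a j)"
  show ?thesis
  proof (cases "p dvd S")
    case False
    have "\<not> p dvd (r * (\<Sum>j\<in>Y. a j * 1))"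
      using False pr assms(1) unfolding S_def by (simp add: prime_dvd_mult_iff)
    thus ?thesis using construct[of p r a Y "\<lambda>_. 1"] assms r0 by auto
  next
    case True
    define x where "x = (\<lambda>j. if j = j0 then 2 else 1::nat)"
    have "(\<Sum>j\<in>Y. a j * x j) = (\<Sum>j\<in>Y. a j + (if j = j0 then a j else 0))"
      unfolding x_def by (intro sum.cong refl) auto
    also have "\<dots> = S + a j0" unfolding S_def using j0(1)
      by (simp add: sum.distrib)
    finally have e: "(\<Sum>j\<in>Y. a j * x j) = S + a j0" .
    have "\<not> p dvd (S + a j0)" using True j0(2) by (simp add: dvd_add_right_iff)
    hence "\<not> p dvd (r * (\<Sum>j\<in>Y. a j * x j))"
      using pr assms(1) e by (simp add: prime_dvd_mult_iff)
    moreover have "\<forall>j\<in>Y. x j > 0" unfolding x_def by simp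
    ultimately show ?thesis using construct[of p r a Y x] assms r0 by auto
  qed
qed

end
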